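(* Let $n\ge 3$ be odd and let $f=f_n$. If $x$ is an $n$-bit string of odd weight and $\overline{x}$ denotes its one's complement (the string obtained by flipping every bit of $x$), then $$f_n(\overline{x}) = f_n(x) + 2^{n-1}.$$
   Context: An $n$-bit string is $x=x_1x_2\cdots x_n$ with each $x_i\in\{0,1\}$; its (Hamming) weight is the number of $1$s. For distinct $n$-bit strings, $x<y$ in lexicographic order if there is $k$ with $x_j=y_j$ for all $j<k$ and $x_k<y_k$. Let $S_n^i$ be the sequence of all $n$-bit strings of weight $i$ listed in increasing lexicographic order, and $R_n^i$ the same strings listed in the reverse order (decreasing lexicographic order). Define the sequence $S_n$ as the concatenation $S_n=(R_n^1,R_n^3,R_n^5,\dots,R_n^{n-1},S_n^n,S_n^{n-2},\dots,S_n^4,S_n^2,S_n^0)$ if $n$ is even, and $S_n=(R_n^1,R_n^3,\dots,R_n^{n-2},R_n^n,S_n^{n-1},\dots,S_n^4,S_n^2,S_n^0)$ if $n$ is odd. Every $n$-bit string occurs exactly once in $S_n$; let $f_n$ be the bijection from $n$-bit strings to $\{1,\dots,2^n\}$ sending the string in position $j$ of $S_n$ to $j$. *)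

theory Defs
  imports Main "HOL-Library.List_Lexorder"
begin

text \<open>n-bit strings are lists of booleans of length n (True = 1, False = 0).
  The order on bool list from List_Lexorder is lexicographic with False < True;
  on strings of equal length it is exactly the lexicographic order of the paper.\<close>

definition weight :: "bool list \<Rightarrow> nat" where
  "weight x = count_list x True"

definition Slex :: "nat \<Rightarrow> nat \<Rightarrow> bool list list" where
  "Slex n i = sorted_list_of_set {x. length x = n \<and> weight x = i}"

definition Rlex :: "nat \<Rightarrow> nat \<Rightarrow> bool list list" where
  "Rlex n i = rev (Slex n i)"

definition Seq :: "nat \<Rightarrow> bool list list" where
  "Seq n = concat (map (Rlex n) (filter odd [0..<Suc n]))
         @ concat (map (Slex n) (rev (filter even [0..<Suc n])))"

definition f :: "nat \<Rightarrow> bool list \<Rightarrow> nat" where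
  "f n x = (THE j. j \<in> {1..2^n} \<and> Seq n ! (j - 1) = x)"

definition compl :: "bool list \<Rightarrow> bool list" where
  "compl x = map Not x"

end

theory Submission imports Defs begin

definition W :: "nat \<Rightarrow> nat \<Rightarrow> bool list set" where
  "W n i = {x. length x = n \<and> weight x = i}"

lemma finW: "finite (W n i)"
proof -
  have "W n i \<subseteq> {xs. set xs \<subseteq> UNIV \<and> length xs = n}" by (auto simp: W_def)
  thus ?thesis using finite_lists_length_eq[of "UNIV::bool set" n] finite_subset by auto
qed

lemma weight_compl: "weight (compl x) + weight x = length x"
  by (induction x) (auto simp: weight_def compl_def)

lemma compl_compl[simp]: "compl (compl x) = x"
  by (simp add: compl_def comp_def)

lemma length_compl[simp]: "length (compl x) = length x"
  by (simp add: compl_def)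

lemma inj_compl: "inj compl"
  by (metis compl_compl injI)

lemma compl_anti:
  assumes "(x::bool list) < y" "length x = length y"
  shows "compl y < compl x"
proof -
  from assms(1) have "(x,y) \<in> lexord {(u, v). u < v}" by (simp add: list_less_def)
  then obtain a v where c: "y = x @ a # v \<or> (\<exists>u a b v w. (a,b) \<in> {(u::bool, v). u < v} \<and> x = u @ (a # v) \<and> y = u @ (b # w))"
    unfolding lexord_def by blast
  then obtain u a b v w where h: "a < b" "x = u @ (a # v)" "y = u @ (b # w)"
    using assms(2) by auto
  hence "(\<not> b) < (\<not> a)" by auto
  hence "(compl y, compl x) \<in> lexord {(u, v). u < v}"
    unfolding lexord_def compl_def using h by auto
  thus ?thesis by (simp add: list_less_def)
qed

lemma set_Slex: "set (Slex n i) = W n i"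
  using finW by (simp add: Slex_def W_def[symmetric])

lemma distinct_Slex: "distinct (Slex n i)"
  by (simp add: Slex_def)

lemma compl_W: "i \<le> n \<Longrightarrow> compl ` W n i = W n (n - i)"
proof safe
  fix x assume "x \<in> W n i" thus "compl x \<in> W n (n - i)"
    using weight_compl[of x] by (auto simp: W_def)
next
  fix x assume a: "i \<le> n" "x \<in> W n (n - i)"
  hence "compl x \<in> W n i" using weight_compl[of x] by (auto simp: W_def)
  thus "x \<in> compl ` W n i" by (metis compl_compl image_eqI)
qed

lemma map_compl_Rlex: "i \<le> n \<Longrightarrow> map compl (Rlex n i) = Slex n (n - i)"
proof -
  assume i: "i \<le> n"
  let ?l = "map compl (Rlex n i)"
  have s: "sorted_wrt (<) (Slex n i)" unfolding Slex_def
    by (simp add: sorted_list_of_set.strict_sorted_key_list_of_set finW[unfolded W_def])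
  have "sorted_wrt (<) ?l"
    unfolding Rlex_def sorted_wrt_map sorted_wrt_rev
    apply (rule sorted_wrt_mono_rel[OF _ s])
    using compl_anti by (auto simp: set_Slex W_def)
  moreover have "set ?l = W n (n - i)"
    using compl_W[OF i] by (simp add: Rlex_def set_Slex)
  moreover have "length ?l = card (W n (n - i))"
    by (metis calculation(2) distinct_Slex distinct_card distinct_map distinct_rev inj_compl
        inj_on_subset subset_UNIV Rlex_def)
  ultimately have "sorted_list_of_set (W n (n - i)) = ?l"
    using sorted_list_of_set_unique[of "W n (n-i)" ?l] finW by simp
  thus ?thesis by (simp add: Slex_def W_def)
qed

lemma distinct_concat_map:
  assumes "distinct xs" "\<And>i. i \<in> set xs \<Longrightarrow> distinct (g i)"
    "\<And>i j. i \<in> set xs \<Longrightarrow> j \<in> set xs \<Longrightarrow> i \<noteq> j \<Longrightarrow> set (g i) \<inter> set (g j) = {}"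
  shows "distinct (concat (map g xs))"
  using assms by (induction xs) fastforce+

lemma rev_upt_map: "map (\<lambda>i. n - i) [0..<Suc n] = rev [0..<Suc n]"
  by (rule nth_equalityI) (auto simp: rev_nth simp del: upt_Suc)

lemma evens_odds:
  assumes "odd n"
  shows "map (\<lambda>i. n - i) (filter odd [0..<Suc n]) = rev (filter even [0..<Suc n])"
proof -
  have "rev (filter even [0..<Suc n]) = filter even (map (\<lambda>i. n - i) [0..<Suc n])"
    by (simp only: rev_upt_map rev_filter)
  also have "\<dots> = map (\<lambda>i. n - i) (filter (\<lambda>i. even (n - i)) [0..<Suc n])"
    by (simp add: filter_map comp_def)
  also have "filter (\<lambda>i. even (n - i)) [0..<Suc n] = filter odd [0..<Suc n]"
    by (rule filter_cong) (use assms in auto)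
  finally show ?thesis by simp
qed

lemma f_eq:
  assumes "distinct L" "length L = 2^n" "q < 2^n" "L ! q = y"
  shows "(THE j. j \<in> {1..2^n} \<and> L ! (j - 1) = y) = q + 1"
proof (rule the_equality)
  show "q + 1 \<in> {1..2^n} \<and> L ! (q + 1 - 1) = y" using assms by auto
next
  fix j assume "j \<in> {1..2^n} \<and> L ! (j - 1) = y"
  hence "j - 1 < length L" "L ! (j - 1) = L ! q" "j \<ge> 1" using assms by auto
  hence "j - 1 = q" using assms nth_eq_iff_index_eq by metis
  thus "j = q + 1" using \<open>j \<ge> 1\<close> by simp
qed

theorem mainTheorem1:
  fixes n :: nat and x :: "bool list"
  assumes "n \<ge> 3" and "odd n" and "length x = n" and "odd (weight x)"
  shows "f n (compl x) = f n x + 2 ^ (n - 1)"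
proof -
  define odds where "odds = filter odd [0..<Suc n]"
  define A where "A = concat (map (Rlex n) odds)"
  have wle: "weight y \<le> length y" for y
    using weight_compl[of y] by simp
  have "map compl A = concat (map (\<lambda>i. map compl (Rlex n i)) odds)"
    by (simp add: A_def map_concat comp_def)
  also have "\<dots> = concat (map (\<lambda>i. Slex n (n - i)) odds)"
    by (rule arg_cong[where f=concat], rule map_cong) (auto simp: odds_def map_compl_Rlex simp del: upt_Suc)
  also have "\<dots> = concat (map (Slex n) (rev (filter even [0..<Suc n])))"
    unfolding evens_odds[OF assms(2), symmetric] odds_def by (simp add: comp_def del: upt_Suc)
  finally have seq: "Seq n = A @ map compl A"
    by (simp add: Seq_def A_def odds_def)
  have setA': "y \<in> set A \<longleftrightarrow> length y = n \<and> odd (weight y)" for y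
  proof -
    have "weight y \<le> length y" using wle by simp
    have "set A = (\<Union>i\<in>set odds. W n i)"
      by (simp add: A_def Rlex_def set_Slex)
    moreover have "set odds = {i. i \<le> n \<and> odd i}"
      by (auto simp: odds_def simp del: upt_Suc)
    ultimately show ?thesis using \<open>weight y \<le> length y\<close>
      by (auto simp: W_def)
  qed
  have setA: "set A = {y. length y = n \<and> odd (weight y)}" using setA' by blast
  have dA: "distinct A" unfolding A_def
  proof (rule distinct_concat_map)
    show "distinct odds" by (simp add: odds_def del: upt_Suc)
    show "distinct (Rlex n i)" for i by (simp add: Rlex_def distinct_Slex)
    show "set (Rlex n i) \<inter> set (Rlex n j) = {}" if "i \<noteq> j" for i j
      using that by (auto simp: Rlex_def set_Slex W_def)
  qed
  have wc: "length y = n \<Longrightarrow> odd (weight (compl y)) \<longleftrightarrow> even (weight y)" for y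
    using weight_compl[of y] assms(2) by (metis even_add length_compl)
  have dS: "distinct (Seq n)"
  proof -
    have "distinct (map compl A)" using dA inj_compl by (simp add: distinct_map inj_on_subset[OF inj_compl])
    moreover have "set A \<inter> set (map compl A) = {}"
    proof (rule ccontr)
      assume "set A \<inter> set (map compl A) \<noteq> {}"
      then obtain z where "z \<in> set A" "compl z \<in> set A" by auto
      thus False using setA' wc by blast
    qed
    ultimately show ?thesis unfolding seq using dA by simp
  qed
  have sS: "set (Seq n) = set A \<union> compl ` set A" unfolding seq by simp
  have "y \<in> set (Seq n) \<longleftrightarrow> length y = n" for y
  proof
    assume "y \<in> set (Seq n)" thus "length y = n" unfolding sS using setA' length_compl by (metis UnE imageE)
  next
    assume l: "length y = n"
    show "y \<in> set (Seq n)"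
    proof (cases "odd (weight y)")
      case True hence "y \<in> set A" using l setA'[of y] by simp
      thus ?thesis unfolding sS by simp
    next
      case False
      hence "compl y \<in> set A" using l setA'[of "compl y"] wc[of y] by simp
      hence "compl (compl y) \<in> compl ` set A" by (rule imageI)
      thus ?thesis unfolding sS by simp
    qed
  qed
  hence "set (Seq n) = {y. length y = n}" by blast
  hence "length (Seq n) = card {y::bool list. set y \<subseteq> UNIV \<and> length y = n}"
    using distinct_card[OF dS] by simp
  moreover have "card {y::bool list. set y \<subseteq> UNIV \<and> length y = n} = 2 ^ n"
    using card_lists_length_eq[of "UNIV::bool set" n] finite[of "UNIV::bool set"] by (simp only: card_UNIV_bool)
  ultimately have lS: "length (Seq n) = 2^n" by simp
  hence h2: "2 * length A = 2 ^ n" by (simp add: seq)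
  moreover have "(2::nat) ^ n = 2 * 2 ^ (n - 1)"
  proof -
    have "n = Suc (n - 1)" using assms(1) by simp
    hence "(2::nat) ^ n = 2 ^ Suc (n - 1)" by metis
    thus ?thesis by simp
  qed
  ultimately have lA: "length A = 2 ^ (n - 1)" by simp
  have "x \<in> set A" using setA' assms by simp
  then obtain p where p: "p < length A" "A ! p = x" by (metis in_set_conv_nth)
  have s1: "Seq n ! p = x" using p unfolding seq by (simp add: nth_append)
  have s2: "Seq n ! (length A + p) = compl x" using p unfolding seq by (simp add: nth_append)
  have "f n x = p + 1" unfolding f_def
    by (rule f_eq[OF dS lS _ s1]) (use p h2 in linarith)
  moreover have "f n (compl x) = length A + p + 1" unfolding f_def
    by (rule f_eq[OF dS lS _ s2]) (use p h2 in linarith)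
  ultimately show ?thesis using lA by simp
qed

end
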